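(* Let $G$ be a finite group, $F$ a field with $\operatorname{char}(F)\nmid|G|$, and $[\alpha]\in H^2(G,F^* )$. Then the semisimple algebra $F^\alpha G$ has a commutative simple component in its Wedderburn decomposition if and only if $[\alpha]$ lies in the image of the restriction to $\operatorname{Ext}(G/G',F^* )$ of the inflation map $H^2(G/G',F^* )\to H^2(G,F^* )$.
   Context: $H^2(X,F^* )$ is the second cohomology group with trivial action. For an abelian group $A$, $\operatorname{Ext}(A,F^* )$ is the subgroup of $H^2(A,F^* )$ consisting of classes represented by symmetric cocycles ($\beta(x,y)=\beta(y,x)$). The inflation map $H^2(G/G',F^* )\to H^2(G,F^* )$ sends the class of $\beta$ to the class of $(x,y)\mapsto\beta(xG',yG')$. For $\alpha\in Z^2(G,F^* )$ the twisted group algebra $F^\alpha G$ has $F$-basis $\{u_g\}$, $F$ central, $u_gu_h=\alpha(g,h)u_{gh}$. *)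

theory Defs
  imports "HOL-Algebra.Algebra"
begin

definition two_cocycle :: "('g, 'b) monoid_scheme \<Rightarrow> ('g \<Rightarrow> 'g \<Rightarrow> 'f::field) \<Rightarrow> bool" where
  "two_cocycle H \<alpha> \<longleftrightarrow>
     (\<forall>x\<in>carrier H. \<forall>y\<in>carrier H. \<alpha> x y \<noteq> 0) \<and>
     (\<forall>x\<in>carrier H. \<forall>y\<in>carrier H. \<forall>z\<in>carrier H.
        \<alpha> x y * \<alpha> (x \<otimes>\<^bsub>H\<^esub> y) z = \<alpha> y z * \<alpha> x (y \<otimes>\<^bsub>H\<^esub> z))"

definition cohomologous :: "('g, 'b) monoid_scheme \<Rightarrow> ('g \<Rightarrow> 'g \<Rightarrow> 'f::field) \<Rightarrow> ('g \<Rightarrow> 'g \<Rightarrow> 'f) \<Rightarrow> bool" where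
  "cohomologous H \<alpha> \<beta> \<longleftrightarrow>
     (\<exists>f :: 'g \<Rightarrow> 'f. (\<forall>x\<in>carrier H. f x \<noteq> 0) \<and>
        (\<forall>x\<in>carrier H. \<forall>y\<in>carrier H.
           \<beta> x y = \<alpha> x y * f x * f y / f (x \<otimes>\<^bsub>H\<^esub> y)))"

definition symmetric_cocycle :: "('g, 'b) monoid_scheme \<Rightarrow> ('g \<Rightarrow> 'g \<Rightarrow> 'f::field) \<Rightarrow> bool" where
  "symmetric_cocycle H \<beta> \<longleftrightarrow> two_cocycle H \<beta> \<and>
     (\<forall>x\<in>carrier H. \<forall>y\<in>carrier H. \<beta> x y = \<beta> y x)"

text \<open>The class of \<beta> lies in Ext(H,F^*): it is represented by a symmetric cocycle.\<close>
definition in_Ext :: "('g, 'b) monoid_scheme \<Rightarrow> ('g \<Rightarrow> 'g \<Rightarrow> 'f::field) \<Rightarrow> bool" where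
  "in_Ext H \<beta> \<longleftrightarrow> (\<exists>\<gamma>. symmetric_cocycle H \<gamma> \<and> cohomologous H \<beta> \<gamma>)"

abbreviation abelianization :: "('g, 'b) monoid_scheme \<Rightarrow> 'g set monoid" where
  "abelianization G \<equiv> G Mod (derived G (carrier G))"

definition inflation :: "('g, 'b) monoid_scheme \<Rightarrow> ('g set \<Rightarrow> 'g set \<Rightarrow> 'f) \<Rightarrow> 'g \<Rightarrow> 'g \<Rightarrow> 'f" where
  "inflation G \<beta> = (\<lambda>x y. \<beta> (derived G (carrier G) #>\<^bsub>G\<^esub> x) (derived G (carrier G) #>\<^bsub>G\<^esub> y))"

text \<open>Twisted group algebra F^\<alpha>G: elements are F-valued functions supported on carrier G
  (a = \<Sum> a(g) u_g), with twisted convolution product u_x u_y = \<alpha>(x,y) u_{xy}.\<close>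
definition tga_carrier :: "('g, 'b) monoid_scheme \<Rightarrow> ('g \<Rightarrow> 'f::field) set" where
  "tga_carrier G = {a. \<forall>x. x \<notin> carrier G \<longrightarrow> a x = 0}"

definition tga_mult :: "('g, 'b) monoid_scheme \<Rightarrow> ('g \<Rightarrow> 'g \<Rightarrow> 'f::field) \<Rightarrow> ('g \<Rightarrow> 'f) \<Rightarrow> ('g \<Rightarrow> 'f) \<Rightarrow> ('g \<Rightarrow> 'f)" where
  "tga_mult G \<alpha> a b = (\<lambda>z. if z \<in> carrier G then
      (\<Sum>x\<in>carrier G. \<Sum>y\<in>carrier G. if x \<otimes>\<^bsub>G\<^esub> y = z then \<alpha> x y * a x * b y else 0) else 0)"

definition tga_ideal :: "('g, 'b) monoid_scheme \<Rightarrow> ('g \<Rightarrow> 'g \<Rightarrow> 'f::field) \<Rightarrow> ('g \<Rightarrow> 'f) set \<Rightarrow> bool" where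
  "tga_ideal G \<alpha> I \<longleftrightarrow> I \<subseteq> tga_carrier G \<and> (\<lambda>_. 0) \<in> I \<and>
     (\<forall>a\<in>I. \<forall>b\<in>I. (\<lambda>x. a x + b x) \<in> I) \<and>
     (\<forall>c. \<forall>a\<in>I. (\<lambda>x. c * a x) \<in> I) \<and>
     (\<forall>r\<in>tga_carrier G. \<forall>a\<in>I. tga_mult G \<alpha> r a \<in> I \<and> tga_mult G \<alpha> a r \<in> I)"

text \<open>Simple components in the Wedderburn decomposition of the semisimple algebra F^\<alpha>G
  are its minimal nonzero two-sided ideals.\<close>
definition tga_simple_component :: "('g, 'b) monoid_scheme \<Rightarrow> ('g \<Rightarrow> 'g \<Rightarrow> 'f::field) \<Rightarrow> ('g \<Rightarrow> 'f) set \<Rightarrow> bool" where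
  "tga_simple_component G \<alpha> I \<longleftrightarrow> tga_ideal G \<alpha> I \<and> I \<noteq> {\<lambda>_. 0} \<and>
     (\<forall>J. tga_ideal G \<alpha> J \<and> J \<subseteq> I \<and> J \<noteq> {\<lambda>_. 0} \<longrightarrow> J = I)"

definition has_commutative_simple_component :: "('g, 'b) monoid_scheme \<Rightarrow> ('g \<Rightarrow> 'g \<Rightarrow> 'f::field) \<Rightarrow> bool" where
  "has_commutative_simple_component G \<alpha> \<longleftrightarrow>
     (\<exists>I. tga_simple_component G \<alpha> I \<and> (\<forall>a\<in>I. \<forall>b\<in>I. tga_mult G \<alpha> a b = tga_mult G \<alpha> b a))"

end

theory Submission imports Defs "HOL-Library.Function_Algebras" begin

definition sc :: "'f::field \<Rightarrow> ('g \<Rightarrow> 'f) \<Rightarrow> ('g \<Rightarrow> 'f)" where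
  "sc c a = (\<lambda>x. c * a x)"

lemma sum_fun_apply: "(\<Sum>i\<in>S. f i) x = (\<Sum>i\<in>S. f i x)"
  by (induction S rule: infinite_finite_induct) auto

lemma cocycle_unit:
  assumes "group H" "two_cocycle H \<gamma>" "x \<in> carrier H"
  shows "\<gamma> \<one>\<^bsub>H\<^esub> x = \<gamma> \<one>\<^bsub>H\<^esub> \<one>\<^bsub>H\<^esub>" "\<gamma> x \<one>\<^bsub>H\<^esub> = \<gamma> \<one>\<^bsub>H\<^esub> \<one>\<^bsub>H\<^esub>"
proof -
  interpret H: group H by fact
  have nz: "\<And>a b. a \<in> carrier H \<Longrightarrow> b \<in> carrier H \<Longrightarrow> \<gamma> a b \<noteq> 0"
    using assms(2) unfolding two_cocycle_def by auto
  have c: "\<And>a b d. a \<in> carrier H \<Longrightarrow> b \<in> carrier H \<Longrightarrow> d \<in> carrier H \<Longrightarrow>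
     \<gamma> a b * \<gamma> (a \<otimes>\<^bsub>H\<^esub> b) d = \<gamma> b d * \<gamma> a (b \<otimes>\<^bsub>H\<^esub> d)"
    using assms(2) unfolding two_cocycle_def by auto
  let ?e = "\<one>\<^bsub>H\<^esub>"
  from c[of ?e ?e x] assms(3) have "\<gamma> ?e ?e * \<gamma> ?e x = \<gamma> ?e x * \<gamma> ?e x" by simp
  with nz[of ?e x] assms(3) show "\<gamma> ?e x = \<gamma> ?e ?e" by (simp add: mult.commute)
  from c[of x ?e ?e] assms(3) have "\<gamma> x ?e * \<gamma> x ?e = \<gamma> ?e ?e * \<gamma> x ?e" by simp
  with nz[of x ?e] assms(3) show "\<gamma> x ?e = \<gamma> ?e ?e" by simp
qed

lemma sc_cancel: "v \<noteq> 0 \<Longrightarrow> sc t v = sc t' v \<Longrightarrow> t = t'"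
proof -
  assume v: "v \<noteq> 0" and e: "sc t v = sc t' v"
  obtain z where z: "v z \<noteq> 0" using v by (auto simp: fun_eq_iff)
  from fun_cong[OF e, of z] have "t * v z = t' * v z" by (simp add: sc_def)
  thus "t = t'" using z by simp
qed

interpretation V: vector_space "sc :: 'f::field \<Rightarrow> ('g \<Rightarrow> 'f) \<Rightarrow> ('g \<Rightarrow> 'f)"
  by unfold_locales (simp_all add: sc_def fun_eq_iff algebra_simps)

interpretation VP: vector_space_pair "sc :: 'f::field \<Rightarrow> ('g \<Rightarrow> 'f) \<Rightarrow> ('g \<Rightarrow> 'f)" "sc :: 'f::field \<Rightarrow> ('g \<Rightarrow> 'f) \<Rightarrow> ('g \<Rightarrow> 'f)"
  by unfold_locales

locale tga = group G for G :: "'g monoid" (structure) +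
  fixes \<alpha> :: "'g \<Rightarrow> 'g \<Rightarrow> 'f::field"
  assumes fin: "finite (carrier G)" and coc: "two_cocycle G \<alpha>"
begin

abbreviation A where "A \<equiv> tga_carrier G :: ('g \<Rightarrow> 'f) set"
abbreviation M where "M \<equiv> tga_mult G \<alpha>"
definition \<delta> :: "'g \<Rightarrow> 'g \<Rightarrow> 'f" where "\<delta> g = (\<lambda>z. if z = g then 1 else 0)"

lemma nz: "x \<in> carrier G \<Longrightarrow> y \<in> carrier G \<Longrightarrow> \<alpha> x y \<noteq> 0"
  using coc unfolding two_cocycle_def by auto
lemma cocy: "x \<in> carrier G \<Longrightarrow> y \<in> carrier G \<Longrightarrow> z \<in> carrier G \<Longrightarrow>
     \<alpha> x y * \<alpha> (x \<otimes> y) z = \<alpha> y z * \<alpha> x (y \<otimes> z)"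
  using coc unfolding two_cocycle_def by auto

definition c0 where "c0 = \<alpha> \<one> \<one>"
lemma c0_nz: "c0 \<noteq> 0" unfolding c0_def using nz by simp
lemma al1: "x \<in> carrier G \<Longrightarrow> \<alpha> \<one> x = c0" "x \<in> carrier G \<Longrightarrow> \<alpha> x \<one> = c0"
  unfolding c0_def by (rule cocycle_unit[OF is_group coc]; assumption)+

lemma M_in: "M a b \<in> A" unfolding tga_mult_def tga_carrier_def by auto
lemma delta_in: "\<delta> g \<in> A" if "g \<in> carrier G" using that unfolding \<delta>_def tga_carrier_def by auto
lemma sc_in: "a \<in> A \<Longrightarrow> sc c a \<in> A" unfolding sc_def tga_carrier_def by auto
lemma add_in: "a \<in> A \<Longrightarrow> b \<in> A \<Longrightarrow> a + b \<in> A" unfolding tga_carrier_def by auto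
lemma zero_in: "0 \<in> A" unfolding tga_carrier_def by auto
lemma sum_in: "(\<And>i. i \<in> S \<Longrightarrow> f i \<in> A) \<Longrightarrow> sum f S \<in> A"
  unfolding tga_carrier_def by (auto simp: sum_fun_apply)

lemma M_alt: "z \<in> carrier G \<Longrightarrow> M a b z = (\<Sum>x\<in>carrier G. \<alpha> x (inv x \<otimes> z) * a x * b (inv x \<otimes> z))"
proof -
  assume z: "z \<in> carrier G"
  have "\<And>x. x \<in> carrier G \<Longrightarrow> (\<Sum>y\<in>carrier G. if x \<otimes> y = z then \<alpha> x y * a x * b y else 0)
     = \<alpha> x (inv x \<otimes> z) * a x * b (inv x \<otimes> z)"
  proof -
    fix x assume x: "x \<in> carrier G"
    have "\<And>y. y \<in> carrier G \<Longrightarrow> (x \<otimes> y = z) = (y = inv x \<otimes> z)"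
      using x z inv_solve_left by auto
    hence "(\<Sum>y\<in>carrier G. if x \<otimes> y = z then \<alpha> x y * a x * b y else 0)
       = (\<Sum>y\<in>carrier G. if y = inv x \<otimes> z then \<alpha> x y * a x * b y else 0)"
      by (intro sum.cong) auto
    also have "\<dots> = \<alpha> x (inv x \<otimes> z) * a x * b (inv x \<otimes> z)"
      using x z fin by (simp add: sum.delta')
    finally show "?thesis x" .
  qed
  thus ?thesis using z unfolding tga_mult_def by (auto intro: sum.cong)
qed


lemma sc_sc: "sc a (sc b x) = sc (a * b) x" by (simp add: sc_def fun_eq_iff)
lemma sc_one: "sc 1 x = x" by (simp add: sc_def)
lemma sc_zero: "sc 0 x = 0" "sc a 0 = 0" by (simp_all add: sc_def fun_eq_iff)
lemma sc_add: "sc a (x + y) = sc a x + sc a y" by (simp add: sc_def fun_eq_iff algebra_simps)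
lemma sc_add2: "sc (a + b) x = sc a x + sc b x" by (simp add: sc_def fun_eq_iff algebra_simps)
lemma sc_sum: "sc a (sum f S) = (\<Sum>i\<in>S. sc a (f i))"
  by (simp add: sc_def fun_eq_iff sum_fun_apply sum_distrib_left)
lemma sum_sc: "sc (sum f S) x = (\<Sum>i\<in>S. sc (f i) x)"
  by (simp add: sc_def fun_eq_iff sum_fun_apply sum_distrib_right)

lemma M_add_left: "M (a + b) c = M a c + M b c"
  by (auto simp: tga_mult_def fun_eq_iff sum.distrib[symmetric] algebra_simps intro!: sum.cong)
lemma M_add_right: "M c (a + b) = M c a + M c b"
  by (auto simp: tga_mult_def fun_eq_iff sum.distrib[symmetric] algebra_simps intro!: sum.cong)
lemma M_sc_left: "M (sc k a) b = sc k (M a b)"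
  by (auto simp: tga_mult_def fun_eq_iff sc_def sum_distrib_left algebra_simps intro!: sum.cong)
lemma M_sc_right: "M b (sc k a) = sc k (M b a)"
  by (auto simp: tga_mult_def fun_eq_iff sc_def sum_distrib_left algebra_simps intro!: sum.cong)
lemma M_zero1: "M 0 b = 0" unfolding tga_mult_def by (simp add: fun_eq_iff cong: if_cong)
lemma M_zero2: "M b 0 = 0" unfolding tga_mult_def by (simp add: fun_eq_iff cong: if_cong)
lemma M_zero3: "M (\<lambda>a. 0) b = (\<lambda>a. 0)" "M b (\<lambda>a. 0) = (\<lambda>a. 0)"
  using M_zero1 M_zero2 by (simp_all add: zero_fun_def)
lemmas M_zero = M_zero1 M_zero2 M_zero3
lemma M_sum_left: "M (\<Sum>i\<in>S. f i) b = (\<Sum>i\<in>S. M (f i) b)"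
proof (induction S rule: infinite_finite_induct)
  case (insert x F)
  have "M (sum f (insert x F)) b = M (f x + sum f F) b" by (simp only: sum.insert[OF insert(1,2)])
  also have "\<dots> = M (f x) b + M (sum f F) b" by (rule M_add_left)
  also have "\<dots> = M (f x) b + (\<Sum>i\<in>F. M (f i) b)" by (simp only: insert(3))
  also have "\<dots> = (\<Sum>i\<in>insert x F. M (f i) b)" by (simp only: sum.insert[OF insert(1,2)])
  finally show ?case .
qed (simp_all add: M_zero)
lemma M_sum_right: "M b (\<Sum>i\<in>S. f i) = (\<Sum>i\<in>S. M b (f i))"
proof (induction S rule: infinite_finite_induct)
  case (insert x F)
  have "M b (sum f (insert x F)) = M b (f x + sum f F)" by (simp only: sum.insert[OF insert(1,2)])
  also have "\<dots> = M b (f x) + M b (sum f F)" by (rule M_add_right)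
  also have "\<dots> = M b (f x) + (\<Sum>i\<in>F. M b (f i))" by (simp only: insert(3))
  also have "\<dots> = (\<Sum>i\<in>insert x F. M b (f i))" by (simp only: sum.insert[OF insert(1,2)])
  finally show ?case .
qed (simp_all add: M_zero)

lemma expand: "a \<in> A \<Longrightarrow> a = (\<Sum>g\<in>carrier G. sc (a g) (\<delta> g))"
proof (rule ext)
  fix z assume a: "a \<in> A"
  show "a z = (\<Sum>g\<in>carrier G. sc (a g) (\<delta> g)) z"
  proof (cases "z \<in> carrier G")
    case True
    have "\<And>g. a g * (if z = g then 1 else 0) = (if z = g then a g else 0)" by simp
    thus ?thesis using fin True by (simp add: sum_fun_apply sc_def \<delta>_def sum.delta')
  next
    case False thus ?thesis using a by (auto simp: sum_fun_apply sc_def \<delta>_def tga_carrier_def intro!: sum.neutral)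
  qed
qed

lemma M_delta_left: "g \<in> carrier G \<Longrightarrow> z \<in> carrier G \<Longrightarrow> M (\<delta> g) b z = \<alpha> g (inv g \<otimes> z) * b (inv g \<otimes> z)"
  using fin by (simp add: M_alt \<delta>_def if_distrib if_distribR sum.delta cong: if_cong)

lemma M_delta_right: "h \<in> carrier G \<Longrightarrow> z \<in> carrier G \<Longrightarrow> M a (\<delta> h) z = \<alpha> (z \<otimes> inv h) h * a (z \<otimes> inv h)"
proof -
  assume h: "h \<in> carrier G" and z: "z \<in> carrier G"
  have "M a (\<delta> h) z = (\<Sum>x\<in>carrier G. if x = z \<otimes> inv h then \<alpha> x h * a x else 0)"
  proof -
    have "\<And>x. x \<in> carrier G \<Longrightarrow> (\<Sum>y\<in>carrier G. if x \<otimes> y = z then \<alpha> x y * a x * \<delta> h y else 0)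
      = (if x = z \<otimes> inv h then \<alpha> x h * a x else 0)"
    proof -
      fix x assume x: "x \<in> carrier G"
      have e: "(x \<otimes> h = z) = (x = z \<otimes> inv h)" using x z h inv_solve_right by auto
      have "(\<Sum>y\<in>carrier G. if x \<otimes> y = z then \<alpha> x y * a x * \<delta> h y else 0)
         = (\<Sum>y\<in>carrier G. if y = h then (if x \<otimes> h = z then \<alpha> x h * a x else 0) else 0)"
        by (intro sum.cong) (auto simp: \<delta>_def)
      also have "\<dots> = (if x = z \<otimes> inv h then \<alpha> x h * a x else 0)" using fin h e by (simp add: sum.delta')
      finally show "?thesis x" .
    qed
    thus ?thesis using z unfolding tga_mult_def by (auto intro: sum.cong)
  qed
  also have "\<dots> = \<alpha> (z \<otimes> inv h) h * a (z \<otimes> inv h)" using fin z h by (simp add: sum.delta')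
  finally show ?thesis .
qed

lemma M_delta: "g \<in> carrier G \<Longrightarrow> h \<in> carrier G \<Longrightarrow> M (\<delta> g) (\<delta> h) = sc (\<alpha> g h) (\<delta> (g \<otimes> h))"
proof (rule ext)
  fix z assume g: "g \<in> carrier G" and h: "h \<in> carrier G"
  show "M (\<delta> g) (\<delta> h) z = sc (\<alpha> g h) (\<delta> (g \<otimes> h)) z"
  proof (cases "z \<in> carrier G")
    case True
    have "(inv g \<otimes> z = h) = (z = g \<otimes> h)" using g h True inv_solve_left' by auto
    moreover have "M (\<delta> g) (\<delta> h) z = \<alpha> g (inv g \<otimes> z) * \<delta> h (inv g \<otimes> z)"
      using True g M_delta_left by blast
    ultimately show ?thesis using True g h
      by (auto simp: sc_def \<delta>_def)
  next
    case False thus ?thesis using M_in[of "\<delta> g" "\<delta> h"] g h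
      by (auto simp: tga_carrier_def sc_def \<delta>_def)
  qed
qed


lemma sc_delta_eq: "sc c (\<delta> g) z = (if z = g then c else 0)" by (simp add: sc_def \<delta>_def)

lemma M_assoc_delta: "g \<in> carrier G \<Longrightarrow> h \<in> carrier G \<Longrightarrow> k \<in> carrier G \<Longrightarrow>
  M (M (\<delta> g) (\<delta> h)) (\<delta> k) = M (\<delta> g) (M (\<delta> h) (\<delta> k))"
  by (simp add: M_delta M_sc_left M_sc_right sc_sc cocy m_assoc)

lemma tri_left: "M (M (\<Sum>g\<in>S. sc (p g) (\<delta> g)) (\<Sum>h\<in>S. sc (q h) (\<delta> h))) (\<Sum>k\<in>S. sc (r k) (\<delta> k))
  = (\<Sum>k\<in>S. \<Sum>h\<in>S. \<Sum>g\<in>S. sc (r k * (q h * p g)) (M (M (\<delta> g) (\<delta> h)) (\<delta> k)))"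
  by (simp add: M_sum_left M_sum_right M_sc_left M_sc_right sc_sum sc_sc mult.assoc)

lemma tri_right: "M (\<Sum>g\<in>S. sc (p g) (\<delta> g)) (M (\<Sum>h\<in>S. sc (q h) (\<delta> h)) (\<Sum>k\<in>S. sc (r k) (\<delta> k)))
  = (\<Sum>k\<in>S. \<Sum>h\<in>S. \<Sum>g\<in>S. sc (r k * (q h * p g)) (M (\<delta> g) (M (\<delta> h) (\<delta> k))))"
  by (simp add: M_sum_left M_sum_right M_sc_left M_sc_right sc_sum sc_sc mult.assoc)

lemma M_assoc: "a \<in> A \<Longrightarrow> b \<in> A \<Longrightarrow> c \<in> A \<Longrightarrow> M (M a b) c = M a (M b c)"
proof -
  assume a: "a \<in> A" and b: "b \<in> A" and c: "c \<in> A"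
  let ?S = "carrier G"
  have "M (M a b) c = M (M (\<Sum>g\<in>?S. sc (a g) (\<delta> g)) (\<Sum>h\<in>?S. sc (b h) (\<delta> h))) (\<Sum>k\<in>?S. sc (c k) (\<delta> k))"
    by (simp only: expand[OF a, symmetric] expand[OF b, symmetric] expand[OF c, symmetric])
  also have "\<dots> = (\<Sum>k\<in>?S. \<Sum>h\<in>?S. \<Sum>g\<in>?S. sc (c k * (b h * a g)) (M (M (\<delta> g) (\<delta> h)) (\<delta> k)))"
    by (rule tri_left)
  also have "\<dots> = (\<Sum>k\<in>?S. \<Sum>h\<in>?S. \<Sum>g\<in>?S. sc (c k * (b h * a g)) (M (\<delta> g) (M (\<delta> h) (\<delta> k))))"
    by (intro sum.cong refl) (simp add: M_assoc_delta)
  also have "\<dots> = M (\<Sum>g\<in>?S. sc (a g) (\<delta> g)) (M (\<Sum>h\<in>?S. sc (b h) (\<delta> h)) (\<Sum>k\<in>?S. sc (c k) (\<delta> k)))"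
    by (rule tri_right[symmetric])
  also have "\<dots> = M a (M b c)"
    by (simp only: expand[OF a, symmetric] expand[OF b, symmetric] expand[OF c, symmetric])
  finally show ?thesis .
qed


definition e1 where "e1 = sc (1/c0) (\<delta> \<one>)"
definition w where "w g = sc (1/(\<alpha> g (inv g) * c0)) (\<delta> (inv g))"

lemma e1_in: "e1 \<in> A" unfolding e1_def by (intro sc_in delta_in) simp
lemma w_in: "g \<in> carrier G \<Longrightarrow> w g \<in> A" unfolding w_def by (intro sc_in delta_in) simp

lemma M_e1_left: "b \<in> A \<Longrightarrow> M e1 b = b"
proof (rule ext)
  fix z assume b: "b \<in> A"
  show "M e1 b z = b z"
  proof (cases "z \<in> carrier G")
    case True thus ?thesis using c0_nz
      unfolding e1_def M_sc_left unfolding sc_def by (simp add: M_delta_left al1)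
  next
    case False thus ?thesis using b M_in[of e1 b] by (simp add: tga_carrier_def)
  qed
qed

lemma M_e1_right: "b \<in> A \<Longrightarrow> M b e1 = b"
proof (rule ext)
  fix z assume b: "b \<in> A"
  show "M b e1 z = b z"
  proof (cases "z \<in> carrier G")
    case True thus ?thesis using c0_nz
      unfolding e1_def M_sc_right unfolding sc_def by (simp add: M_delta_right al1)
  next
    case False thus ?thesis using b M_in[of b e1] by (simp add: tga_carrier_def)
  qed
qed

lemma alpha_inv_sym: "g \<in> carrier G \<Longrightarrow> \<alpha> (inv g) g = \<alpha> g (inv g)"
  using cocy[of g "inv g" g] al1[of g] c0_nz by simp

lemma M_delta_w: "g \<in> carrier G \<Longrightarrow> M (\<delta> g) (w g) = e1"
  using nz[of g "inv g"] c0_nz by (simp add: w_def e1_def M_sc_right M_delta sc_sc)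

lemma M_w_delta: "g \<in> carrier G \<Longrightarrow> M (w g) (\<delta> g) = e1"
  using nz[of g "inv g"] c0_nz by (simp add: w_def e1_def M_sc_left M_delta sc_sc alpha_inv_sym)

lemma M_delta_w_shift: "h \<in> carrier G \<Longrightarrow> k \<in> carrier G \<Longrightarrow> M (\<delta> h) (w (k \<otimes> h)) = sc (\<alpha> k h) (w k)"
proof -
  assume h: "h \<in> carrier G" and k: "k \<in> carrier G"
  have hk: "h \<otimes> inv (k \<otimes> h) = inv k" using h k by (simp add: inv_mult_group m_assoc[symmetric])
  have co: "\<alpha> k h * \<alpha> (k \<otimes> h) (inv (k \<otimes> h)) = \<alpha> h (inv (k \<otimes> h)) * \<alpha> k (inv k)"
    using cocy[of k h "inv (k \<otimes> h)"] h k hk by simp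
  have n1: "\<alpha> (k \<otimes> h) (inv (k \<otimes> h)) \<noteq> 0" "\<alpha> k (inv k) \<noteq> 0" using nz h k by auto
  have "M (\<delta> h) (w (k \<otimes> h)) = sc (\<alpha> h (inv (k \<otimes> h)) / (\<alpha> (k \<otimes> h) (inv (k \<otimes> h)) * c0)) (\<delta> (inv k))"
    using h k hk by (simp add: w_def M_sc_right M_delta sc_sc)
  also have "\<dots> = sc (\<alpha> k h) (w k)"
  proof -
    have "\<alpha> h (inv (k \<otimes> h)) / (\<alpha> (k \<otimes> h) (inv (k \<otimes> h)) * c0) = \<alpha> k h * (1/(\<alpha> k (inv k) * c0))"
      using co n1 c0_nz by (simp add: field_simps)
    thus ?thesis unfolding w_def sc_sc by simp
  qed
  finally show ?thesis .
qed


lemma ideal_props: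
  assumes "tga_ideal G \<alpha> I"
  shows "I \<subseteq> A" "0 \<in> I" "\<And>a b. a \<in> I \<Longrightarrow> b \<in> I \<Longrightarrow> a + b \<in> I"
    "\<And>a c. a \<in> I \<Longrightarrow> sc c a \<in> I"
    "\<And>a r. a \<in> I \<Longrightarrow> r \<in> A \<Longrightarrow> M r a \<in> I"
    "\<And>a r. a \<in> I \<Longrightarrow> r \<in> A \<Longrightarrow> M a r \<in> I"
  using assms unfolding tga_ideal_def sc_def plus_fun_def zero_fun_def by auto

lemma ideal_subspace: "tga_ideal G \<alpha> I \<Longrightarrow> V.subspace I"
  using ideal_props[of I] unfolding V.subspace_def by blast

lemma ideal_sum: "tga_ideal G \<alpha> I \<Longrightarrow> (\<And>i. i \<in> S \<Longrightarrow> f i \<in> I) \<Longrightarrow> sum f S \<in> I"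
  using V.subspace_sum[OF ideal_subspace] by blast

lemma sum_const_fun: "(\<Sum>g\<in>S. r) = sc (of_nat (card S)) r"
  by (simp add: fun_eq_iff sum_fun_apply sc_def)

lemma semiprime:
  assumes I: "tga_ideal G \<alpha> I" and sq: "\<forall>a\<in>I. \<forall>b\<in>I. M a b = 0"
    and ch: "of_nat (card (carrier G)) \<noteq> (0::'f)"
  shows "I \<subseteq> {0}"
proof -
  note ip = ideal_props[OF I]
  have sub: "V.subspace I" by (rule ideal_subspace[OF I])
  obtain B where B: "B \<subseteq> I" "V.independent B" "I \<subseteq> V.span B"
    using V.basis_exists[of I] by metis
  define p where "p = VP.construct B id"
  interpret lp: Vector_Spaces.linear sc sc p unfolding p_def by (rule VP.linear_construct[OF B(2)])
  have spanB: "V.span B \<subseteq> I" using V.span_minimal[OF B(1) sub] .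
  have p_in: "p v \<in> I" for v
  proof -
    have "p v \<in> V.span (id ` B)" unfolding p_def by (rule VP.construct_in_span[OF B(2)])
    thus ?thesis using spanB by auto
  qed
  have p_id: "p v = v" if "v \<in> I" for v
  proof -
    have "p v = id v"
    proof (rule VP.linear_eq_on[of p id])
      show "Vector_Spaces.linear sc sc p" by (rule lp.linear_axioms)
      show "Vector_Spaces.linear sc sc id" by (rule V.linear_id)
      show "v \<in> V.span B" using that B(3) by auto
      show "\<And>b. b \<in> B \<Longrightarrow> p b = id b" unfolding p_def by (rule VP.construct_basis[OF B(2)])
    qed
    thus ?thesis by simp
  qed
  define n where "n = (of_nat (card (carrier G)) :: 'f)"
  define \<pi> where "\<pi> y = sc (1/n) (\<Sum>g\<in>carrier G. M (p (M y (w g))) (\<delta> g))" for y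
  have pi_in: "\<pi> y \<in> I" for y
    unfolding \<pi>_def by (intro ip(4) ideal_sum[OF I] ip(6) p_in delta_in)
  have pi_id: "\<pi> r = r" if r: "r \<in> I" for r
  proof -
    have rA: "r \<in> A" using r ip(1) by auto
    have "(\<Sum>g\<in>carrier G. M (p (M r (w g))) (\<delta> g)) = (\<Sum>g\<in>carrier G. r)"
    proof (intro sum.cong refl)
      fix g assume g: "g \<in> carrier G"
      have "M (p (M r (w g))) (\<delta> g) = M (M r (w g)) (\<delta> g)" using p_id ip(6) r w_in g by simp
      also have "\<dots> = M r (M (w g) (\<delta> g))" using M_assoc rA w_in delta_in g by simp
      also have "\<dots> = r" using M_w_delta g M_e1_right rA by simp
      finally show "M (p (M r (w g))) (\<delta> g) = r" .
    qed
    thus ?thesis unfolding \<pi>_def sum_const_fun sc_sc using ch n_def by (simp add: sc_one)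
  qed
  have pi_right: "\<pi> (M y (\<delta> h)) = M (\<pi> y) (\<delta> h)" if y: "y \<in> A" and h: "h \<in> carrier G" for y h
  proof -
    have bij: "bij_betw (\<lambda>k. k \<otimes> h) (carrier G) (carrier G)"
      by (rule bij_betw_byWitness[where f'="\<lambda>g. g \<otimes> inv h"]) (use h in \<open>auto simp: m_assoc\<close>)
    have "(\<Sum>g\<in>carrier G. M (p (M (M y (\<delta> h)) (w g))) (\<delta> g))
        = (\<Sum>k\<in>carrier G. M (p (M (M y (\<delta> h)) (w (k \<otimes> h)))) (\<delta> (k \<otimes> h)))"
      by (rule sum.reindex_bij_betw[OF bij, symmetric])
    also have "\<dots> = (\<Sum>k\<in>carrier G. M (M (p (M y (w k))) (\<delta> k)) (\<delta> h))"
    proof (intro sum.cong refl)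
      fix k assume k: "k \<in> carrier G"
      have a0: "\<alpha> k h \<noteq> 0" using nz k h by auto
      have "M (M y (\<delta> h)) (w (k \<otimes> h)) = sc (\<alpha> k h) (M y (w k))"
        using M_assoc[OF y delta_in[OF h] w_in[of "k \<otimes> h"]] k h
        by (simp add: M_delta_w_shift M_sc_right)
      hence "p (M (M y (\<delta> h)) (w (k \<otimes> h))) = sc (\<alpha> k h) (p (M y (w k)))" by (simp add: lp.scale)
      moreover have "\<delta> (k \<otimes> h) = sc (1 / \<alpha> k h) (M (\<delta> k) (\<delta> h))"
        using k h a0 by (simp add: M_delta sc_sc sc_one)
      ultimately have "M (p (M (M y (\<delta> h)) (w (k \<otimes> h)))) (\<delta> (k \<otimes> h)) = M (p (M y (w k))) (M (\<delta> k) (\<delta> h))"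
        using a0 by (simp add: M_sc_left M_sc_right sc_sc sc_one)
      also have "\<dots> = M (M (p (M y (w k))) (\<delta> k)) (\<delta> h)"
      proof -
        have "p (M y (w k)) \<in> A" using p_in ip(1) by blast
        thus ?thesis by (simp add: M_assoc[OF _ delta_in[OF k] delta_in[OF h]])
      qed
      finally show "M (p (M (M y (\<delta> h)) (w (k \<otimes> h)))) (\<delta> (k \<otimes> h)) = M (M (p (M y (w k))) (\<delta> k)) (\<delta> h)" .
    qed
    also have "\<dots> = M (\<Sum>k\<in>carrier G. M (p (M y (w k))) (\<delta> k)) (\<delta> h)"
      by (simp add: M_sum_left)
    finally show ?thesis unfolding \<pi>_def by (simp add: M_sc_left)
  qed
  have pi_lin: "\<pi> (\<Sum>h\<in>S. sc (c h) (x h)) = (\<Sum>h\<in>S. sc (c h) (\<pi> (x h)))" for S c x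
  proof -
    have "\<pi> (\<Sum>h\<in>S. sc (c h) (x h)) = sc (1/n) (\<Sum>g\<in>carrier G. \<Sum>h\<in>S. sc (c h) (M (p (M (x h) (w g))) (\<delta> g)))"
      unfolding \<pi>_def by (simp add: M_sum_left M_sc_left lp.sum lp.scale)
    also have "\<dots> = sc (1/n) (\<Sum>h\<in>S. \<Sum>g\<in>carrier G. sc (c h) (M (p (M (x h) (w g))) (\<delta> g)))"
      by (subst sum.swap) (rule refl)
    also have "\<dots> = (\<Sum>h\<in>S. sc (c h) (\<pi> (x h)))"
      unfolding \<pi>_def by (simp add: sc_sum sc_sc mult.commute)
    finally show ?thesis .
  qed
  have pi_M: "\<pi> (M z r) = M (\<pi> z) r" if z: "z \<in> A" and r: "r \<in> A" for z r
  proof -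
    have "\<pi> (M z r) = \<pi> (\<Sum>h\<in>carrier G. sc (r h) (M z (\<delta> h)))"
      by (subst (1) expand[OF r]) (simp add: M_sum_right M_sc_right)
    also have "\<dots> = (\<Sum>h\<in>carrier G. sc (r h) (\<pi> (M z (\<delta> h))))" by (rule pi_lin)
    also have "\<dots> = (\<Sum>h\<in>carrier G. sc (r h) (M (\<pi> z) (\<delta> h)))"
      using pi_right[OF z] by simp
    also have "\<dots> = M (\<pi> z) r"
      by (subst (2) expand[OF r]) (simp add: M_sum_right M_sc_right)
    finally show ?thesis .
  qed
  show ?thesis
  proof
    fix r assume r: "r \<in> I"
    have rA: "r \<in> A" using r ip(1) by auto
    have "r = \<pi> r" using pi_id[OF r] by simp
    also have "\<dots> = \<pi> (M e1 r)" using M_e1_left[OF rA] by simp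
    also have "\<dots> = M (\<pi> e1) r" by (rule pi_M[OF e1_in rA])
    also have "\<dots> = 0" using sq pi_in r by blast
    finally show "r \<in> {0}" by simp
  qed
qed


lemma A_span: "A \<subseteq> V.span (\<delta> ` carrier G)"
proof
  fix a assume a: "a \<in> A"
  have "(\<Sum>g\<in>carrier G. sc (a g) (\<delta> g)) \<in> V.span (\<delta> ` carrier G)"
    by (intro V.span_sum V.span_scale V.span_base) auto
  thus "a \<in> V.span (\<delta> ` carrier G)" using expand[OF a] by simp
qed

lemma dim_eq_subspace:
  assumes S: "V.subspace S" and T: "V.subspace T" and ST: "S \<subseteq> T" and TA: "T \<subseteq> A"
    and d: "V.dim T \<le> V.dim S"
  shows "S = T"
proof (rule ccontr)
  assume "S \<noteq> T"
  then obtain t where t: "t \<in> T" "t \<notin> S" using ST by auto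
  obtain B where B: "B \<subseteq> S" "V.independent B" "S \<subseteq> V.span B" "card B = V.dim S"
    using V.basis_exists[of S] by metis
  obtain C where C: "C \<subseteq> T" "V.independent C" "T \<subseteq> V.span C" "card C = V.dim T"
    using V.basis_exists[of T] by metis
  have W: "finite (\<delta> ` carrier G)" using fin by simp
  have spS: "V.span B \<subseteq> S" using V.span_minimal[OF B(1) S] .
  have tB: "t \<notin> V.span B" using spS t(2) by blast
  have ind: "V.independent (insert t B)" using V.independent_insertI[OF tB B(2)] .
  have TW: "T \<subseteq> V.span (\<delta> ` carrier G)" using TA A_span by (rule order.trans)
  have iT: "insert t B \<subseteq> T" using B(1) ST t(1) by blast
  have finB: "finite (insert t B)"
    using V.independent_span_bound[OF W ind order.trans[OF iT TW]] by (rule conjunct1)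
  have finC: "finite C"
    using V.independent_span_bound[OF W C(2) order.trans[OF C(1) TW]] by (rule conjunct1)
  have "card (insert t B) \<le> card C"
    using V.independent_span_bound[OF finC ind order.trans[OF iT C(3)]] by (rule conjunct2)
  moreover have "t \<notin> B" using tB V.span_base[of t B] by blast
  moreover have "finite B" using finB by simp
  ultimately have "card B + 1 \<le> card C" by simp
  thus False using B(4) C(4) d by simp
qed

lemma minimal_ideal_exists:
  assumes J: "tga_ideal G \<alpha> J" "J \<noteq> {0}"
  shows "\<exists>K. tga_simple_component G \<alpha> K \<and> K \<subseteq> J"
proof -
  let ?P = "\<lambda>K. tga_ideal G \<alpha> K \<and> K \<subseteq> J \<and> K \<noteq> {0}"
  have PJ: "?P J" using J by blast
  obtain K where K: "?P K" and Kmin0: "\<forall>K'. ?P K' \<longrightarrow> V.dim K \<le> V.dim K'"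
    using ex_has_least_nat[of ?P J V.dim, OF PJ] by blast
  have Kmin: "\<And>K'. ?P K' \<Longrightarrow> V.dim K \<le> V.dim K'" using Kmin0 by blast
  have "tga_simple_component G \<alpha> K"
    unfolding tga_simple_component_def
  proof (intro conjI allI impI)
    show "tga_ideal G \<alpha> K" using K by blast
    show "K \<noteq> {\<lambda>_. 0}" using K by (simp add: zero_fun_def)
    fix J' assume J': "tga_ideal G \<alpha> J' \<and> J' \<subseteq> K \<and> J' \<noteq> {\<lambda>_. 0}"
    hence "?P J'" using K by (auto simp: zero_fun_def)
    hence "V.dim K \<le> V.dim J'" by (rule Kmin)
    moreover have "V.subspace J'" using J' ideal_subspace by blast
    moreover have "V.subspace K" using K ideal_subspace by blast
    moreover have "K \<subseteq> A" using K ideal_props(1) by blast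
    ultimately show "J' = K" using dim_eq_subspace[of J' K] J' by blast
  qed
  thus ?thesis using K by blast
qed


abbreviation N where "N \<equiv> derived G (carrier G)"
abbreviation Q where "Q \<equiv> G Mod N"
definition cos where "cos x = N #> x"
definition rep where "rep p = (SOME x. x \<in> p)"

lemma N_normal: "N \<lhd> G" by (rule derived_self_is_normal)
lemma N_sub: "subgroup N G" using N_normal by (simp add: normal_def)
lemma N_carr: "N \<subseteq> carrier G" using N_sub subgroup.subset by blast
lemma Q_group: "group Q" by (rule normal.factorgroup_is_group[OF N_normal])
lemma Q_comm: "comm_group Q" by (rule derived_quot_is_comm_group)
lemma carrier_Q: "carrier Q = rcosets N" by (simp add: FactGroup_def)
lemma mult_Q: "x \<otimes>\<^bsub>Q\<^esub> y = x <#> y" by simp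
lemma one_Q: "\<one>\<^bsub>Q\<^esub> = N" by simp

lemma cos_in: "x \<in> carrier G \<Longrightarrow> cos x \<in> carrier Q"
  unfolding cos_def carrier_Q using rcosetsI N_carr by blast
lemma cos_mult: "x \<in> carrier G \<Longrightarrow> y \<in> carrier G \<Longrightarrow> cos x \<otimes>\<^bsub>Q\<^esub> cos y = cos (x \<otimes> y)"
  unfolding cos_def mult_Q using normal.rcos_sum[OF N_normal] by blast
lemma rep_in: "p \<in> carrier Q \<Longrightarrow> rep p \<in> p \<and> rep p \<in> carrier G \<and> cos (rep p) = p"
proof -
  assume p: "p \<in> carrier Q"
  then obtain x where x: "x \<in> carrier G" "p = N #> x" unfolding carrier_Q RCOSETS_def by blast
  have "x \<in> p" using rcos_self[OF x(1) N_sub] x(2) by simp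
  hence rp: "rep p \<in> p" unfolding rep_def by (rule someI)
  have "rep p \<in> carrier G" using rp x subgroup.elemrcos_carrier[OF N_sub is_group x(1)] by blast
  moreover have "cos (rep p) = p" using repr_independence[OF _ x(1) N_sub, of "rep p"] rp x(2)
    unfolding cos_def by simp
  ultimately show ?thesis using rp by blast
qed
lemma cos_rep: "x \<in> carrier G \<Longrightarrow> cos (rep (cos x)) = cos x"
  using rep_in[OF cos_in] by simp
lemma rep_carr: "x \<in> carrier G \<Longrightarrow> rep (cos x) \<in> carrier G"
  using rep_in[OF cos_in] by simp
lemma rep_decomp: "x \<in> carrier G \<Longrightarrow> \<exists>n\<in>N. x = n \<otimes> rep (cos x)"
proof -
  assume x: "x \<in> carrier G"
  have "rep (cos x) \<in> cos x" using rep_in[OF cos_in[OF x]] by simp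
  hence "rep (cos x) \<in> N #> x" by (simp only: cos_def)
  then obtain m where m: "m \<in> N" "rep (cos x) = m \<otimes> x" unfolding r_coset_def by auto
  have mG: "m \<in> carrier G" using N_carr m(1) by (rule subsetD)
  from inv_solve_left[OF x mG rep_carr[OF x]] m(2) have e: "x = inv m \<otimes> rep (cos x)" by simp
  have "inv m \<in> N" by (rule subgroup.m_inv_closed[OF N_sub m(1)])
  with e show ?thesis by (intro bexI)
qed
lemma comm_in_N: "g \<in> carrier G \<Longrightarrow> h \<in> carrier G \<Longrightarrow> inv (g \<otimes> h) \<otimes> (h \<otimes> g) \<in> N"
proof -
  assume g: "g \<in> carrier G" and h: "h \<in> carrier G"
  have "inv (g \<otimes> h) \<otimes> (h \<otimes> g) = inv h \<otimes> inv g \<otimes> inv (inv h) \<otimes> inv (inv g)"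
    using g h by (simp add: inv_mult_group m_assoc)
  also have "\<dots> \<in> derived_set G (carrier G)"
    by (rule UN_I[OF inv_closed[OF h]], rule UN_I[OF inv_closed[OF g]]) simp
  finally show ?thesis unfolding derived_def by (rule generate.incl)
qed
lemma cos_comm: "g \<in> carrier G \<Longrightarrow> h \<in> carrier G \<Longrightarrow> cos (g \<otimes> h) = cos (h \<otimes> g)"
proof -
  assume g: "g \<in> carrier G" and h: "h \<in> carrier G"
  have "cos g \<otimes>\<^bsub>Q\<^esub> cos h = cos h \<otimes>\<^bsub>Q\<^esub> cos g"
    by (rule comm_monoid.m_comm[OF comm_group.axioms(1)[OF Q_comm] cos_in[OF g] cos_in[OF h]])
  thus ?thesis using cos_mult[OF g h] cos_mult[OF h g] by simp
qed
lemma cos_N: "n \<in> N \<Longrightarrow> cos n = N"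
  unfolding cos_def using subgroup.rcos_const[OF N_sub is_group] by blast
lemma cos_mult_N: "x \<in> carrier G \<Longrightarrow> n \<in> N \<Longrightarrow> cos (x \<otimes> n) = cos x"
proof -
  assume x: "x \<in> carrier G" and n: "n \<in> N"
  have nG: "n \<in> carrier G" using n N_carr by blast
  have "cos (x \<otimes> n) = cos x \<otimes>\<^bsub>Q\<^esub> cos n" using cos_mult x nG by simp
  also have "\<dots> = cos x \<otimes>\<^bsub>Q\<^esub> \<one>\<^bsub>Q\<^esub>" using cos_N n one_Q by simp
  also have "\<dots> = cos x" using monoid.r_one[OF group.is_monoid[OF Q_group] cos_in[OF x]] .
  finally show ?thesis .
qed


lemma delta_one: "\<delta> \<one> = sc c0 e1"
  using c0_nz by (simp add: e1_def sc_sc sc_one)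

lemma central_from_ideal:
  assumes I: "tga_ideal G \<alpha> I" and com: "\<forall>x\<in>I. \<forall>y\<in>I. M x y = M y x"
    and a: "a \<in> I" and b: "b \<in> I"
  shows "\<forall>r\<in>A. M (M b a) r = M r (M b a)"
    and "\<forall>r\<in>A. \<forall>s\<in>A. M (M b a) (M r s) = M (M b a) (M s r)"
proof -
  note ip = ideal_props[OF I]
  have aA: "a \<in> A" and bA: "b \<in> A" using a b ip(1) by auto
  have cent: "M (M b a) r = M r (M b a)" if r: "r \<in> A" for r
  proof -
    have ar: "M a r \<in> I" using ip(6)[OF a r] .
    have rb: "M r b \<in> I" using ip(5)[OF b r] .
    have "M (M b a) r = M b (M a r)" using M_assoc[OF bA aA r] .
    also have "\<dots> = M (M a r) b" using com ar b by blast
    also have "\<dots> = M a (M r b)" using M_assoc[OF aA r bA] .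
    also have "\<dots> = M (M r b) a" using com rb a by blast
    also have "\<dots> = M r (M b a)" using M_assoc[OF r bA aA] .
    finally show ?thesis .
  qed
  thus "\<forall>r\<in>A. M (M b a) r = M r (M b a)" by blast
  show "\<forall>r\<in>A. \<forall>s\<in>A. M (M b a) (M r s) = M (M b a) (M s r)"
  proof (intro ballI)
    fix r s assume r: "r \<in> A" and s: "s \<in> A"
    have ar: "M a r \<in> I" using ip(6)[OF a r] .
    have sb: "M s b \<in> I" using ip(5)[OF b s] .
    have rsb: "M (M r s) b \<in> I" using ip(5)[OF b M_in] .
    have "M (M a r) (M s b) = M a (M r (M s b))" using M_assoc[OF aA r M_in] .
    also have "\<dots> = M a (M (M r s) b)" using M_assoc[OF r s bA] by simp
    also have "\<dots> = M (M (M r s) b) a" using com rsb a by blast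
    also have "\<dots> = M (M r s) (M b a)" using M_assoc[OF M_in bA aA] .
    finally have X1: "M (M a r) (M s b) = M (M r s) (M b a)" .
    have "M (M a r) (M s b) = M (M s b) (M a r)" using com ar sb by blast
    also have "\<dots> = M s (M b (M a r))" using M_assoc[OF s bA M_in] .
    also have "\<dots> = M s (M (M b a) r)" using M_assoc[OF bA aA r] by simp
    also have "\<dots> = M s (M r (M b a))" using cent[OF r] by simp
    also have "\<dots> = M (M s r) (M b a)" using M_assoc[OF s r M_in] by simp
    finally have X2: "M (M a r) (M s b) = M (M s r) (M b a)" .
    have "M (M b a) (M r s) = M (M r s) (M b a)" using cent[OF M_in] .
    also have "\<dots> = M (M s r) (M b a)" using X1 X2 by simp
    also have "\<dots> = M (M b a) (M s r)" using cent[OF M_in] by simp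
    finally show "M (M b a) (M r s) = M (M b a) (M s r)" .
  qed
qed

context
  fixes c assumes cA: "c \<in> A" and c_nz: "c \<noteq> 0"
    and c_cent: "\<forall>r\<in>A. M c r = M r c"
    and c_swap: "\<forall>r\<in>A. \<forall>s\<in>A. M c (M r s) = M c (M s r)"
begin

lemma cd_nz: "g \<in> carrier G \<Longrightarrow> M c (\<delta> g) \<noteq> 0"
proof
  assume g: "g \<in> carrier G" and z: "M c (\<delta> g) = 0"
  have "M (M c (\<delta> g)) (w g) = M c (M (\<delta> g) (w g))" using M_assoc[OF cA delta_in[OF g] w_in[OF g]] .
  also have "\<dots> = c" using M_delta_w[OF g] M_e1_right[OF cA] by simp
  finally show False using z c_nz by (simp add: M_zero)
qed

lemma c_swap_d: "g \<in> carrier G \<Longrightarrow> h \<in> carrier G \<Longrightarrow>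
   M (M c (\<delta> g)) (\<delta> h) = M (M c (\<delta> h)) (\<delta> g)"
  using c_swap delta_in M_assoc[OF cA delta_in delta_in] by metis

lemma c_delta_mult: "g \<in> carrier G \<Longrightarrow> h \<in> carrier G \<Longrightarrow>
   M (M c (\<delta> g)) (\<delta> h) = sc (\<alpha> g h) (M c (\<delta> (g \<otimes> h)))"
  using M_assoc[OF cA delta_in delta_in] by (simp add: M_delta M_sc_right)

lemma comm_step: "a \<in> carrier G \<Longrightarrow> b \<in> carrier G \<Longrightarrow> \<exists>\<mu>. M c (\<delta> (a \<otimes> b \<otimes> inv a \<otimes> inv b)) = sc \<mu> c"
proof -
  assume a: "a \<in> carrier G" and b: "b \<in> carrier G"
  let ?k = "a \<otimes> b \<otimes> inv a \<otimes> inv b"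
  have ia: "inv a \<in> carrier G" and ib: "inv b \<in> carrier G" using a b by auto
  have k1: "a \<otimes> b \<otimes> (inv a \<otimes> inv b) = ?k" using a b by (simp add: m_assoc)
  have aa: "a \<otimes> (inv a \<otimes> inv b) = inv b" using a b by (simp add: m_assoc[symmetric])
  have k2: "b \<otimes> a \<otimes> (inv a \<otimes> inv b) = \<one>" using a b aa by (simp add: m_assoc)
  have "M (M (M c (\<delta> a)) (\<delta> b)) (M (\<delta> (inv a)) (\<delta> (inv b)))
      = M (M (M c (\<delta> b)) (\<delta> a)) (M (\<delta> (inv a)) (\<delta> (inv b)))"
    using c_swap_d[OF a b] by simp
  moreover have "M (M (M c (\<delta> a)) (\<delta> b)) (M (\<delta> (inv a)) (\<delta> (inv b)))
      = sc (\<alpha> a b * (\<alpha> (inv a) (inv b) * \<alpha> (a \<otimes> b) (inv a \<otimes> inv b))) (M c (\<delta> ?k))"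
    using a b ia ib k1 M_assoc[OF cA delta_in delta_in]
    by (simp add: M_delta M_sc_right M_sc_left sc_sc M_assoc[OF cA M_in delta_in])
  moreover have "M (M (M c (\<delta> b)) (\<delta> a)) (M (\<delta> (inv a)) (\<delta> (inv b)))
      = sc (\<alpha> b a * (\<alpha> (inv a) (inv b) * \<alpha> (b \<otimes> a) (inv a \<otimes> inv b))) (M c (\<delta> \<one>))"
    using a b ia ib k2 M_assoc[OF cA delta_in delta_in]
    by (simp add: M_delta M_sc_right M_sc_left sc_sc M_assoc[OF cA M_in delta_in])
  ultimately have e: "sc (\<alpha> a b * (\<alpha> (inv a) (inv b) * \<alpha> (a \<otimes> b) (inv a \<otimes> inv b))) (M c (\<delta> ?k))
     = sc (\<alpha> b a * (\<alpha> (inv a) (inv b) * \<alpha> (b \<otimes> a) (inv a \<otimes> inv b)) * c0) c"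
    by (simp add: delta_one M_sc_right M_e1_right[OF cA] sc_sc)
  have nz1: "\<alpha> a b * (\<alpha> (inv a) (inv b) * \<alpha> (a \<otimes> b) (inv a \<otimes> inv b)) \<noteq> 0"
    using nz a b ia ib by simp
  have "M c (\<delta> ?k) = sc (1 / (\<alpha> a b * (\<alpha> (inv a) (inv b) * \<alpha> (a \<otimes> b) (inv a \<otimes> inv b))))
      (sc (\<alpha> a b * (\<alpha> (inv a) (inv b) * \<alpha> (a \<otimes> b) (inv a \<otimes> inv b))) (M c (\<delta> ?k)))"
    using nz1 by (simp add: sc_sc sc_one)
  also have "\<dots> = sc (1 / (\<alpha> a b * (\<alpha> (inv a) (inv b) * \<alpha> (a \<otimes> b) (inv a \<otimes> inv b)))
      * (\<alpha> b a * (\<alpha> (inv a) (inv b) * \<alpha> (b \<otimes> a) (inv a \<otimes> inv b)) * c0)) c"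
    by (simp only: e sc_sc)
  finally show ?thesis by blast
qed


lemma N_W: "k \<in> N \<Longrightarrow> \<exists>\<mu>. M c (\<delta> k) = sc \<mu> c"
  unfolding derived_def
proof (induction k rule: generate.induct)
  case one
  have "M c (\<delta> \<one>) = sc c0 c" by (simp add: delta_one M_sc_right M_e1_right[OF cA])
  thus ?case by blast
next
  case (incl h)
  then obtain a b where ab: "a \<in> carrier G" "b \<in> carrier G" "h = a \<otimes> b \<otimes> inv a \<otimes> inv b" by blast
  thus ?case using comm_step by blast
next
  case (inv h)
  then obtain a b where ab: "a \<in> carrier G" "b \<in> carrier G" "h = a \<otimes> b \<otimes> inv a \<otimes> inv b" by blast
  have "inv h = b \<otimes> a \<otimes> inv b \<otimes> inv a" using ab by (simp add: inv_mult_group m_assoc)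
  thus ?case using comm_step[OF ab(2) ab(1)] by simp
next
  case (eng h1 h2)
  then obtain \<mu>1 \<mu>2 where m1: "M c (\<delta> h1) = sc \<mu>1 c" and m2: "M c (\<delta> h2) = sc \<mu>2 c" by blast
  have h1: "h1 \<in> carrier G" and h2: "h2 \<in> carrier G"
    using eng.hyps N_carr unfolding derived_def by auto
  have an: "\<alpha> h1 h2 \<noteq> 0" using nz h1 h2 by simp
  have "sc (\<alpha> h1 h2) (M c (\<delta> (h1 \<otimes> h2))) = sc (\<mu>1 * \<mu>2) c"
    using c_delta_mult[OF h1 h2] m1 m2 by (simp add: M_sc_left sc_sc)
  hence "sc (1/\<alpha> h1 h2) (sc (\<alpha> h1 h2) (M c (\<delta> (h1 \<otimes> h2)))) = sc (1/\<alpha> h1 h2) (sc (\<mu>1 * \<mu>2) c)" by simp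
  hence "M c (\<delta> (h1 \<otimes> h2)) = sc (1/\<alpha> h1 h2 * (\<mu>1 * \<mu>2)) c" using an by (simp add: sc_sc sc_one)
  thus ?case by blast
qed

definition s where "s x = (SOME t. M c (\<delta> x) = sc t (M c (\<delta> (rep (cos x)))))"

lemma s_prop: "x \<in> carrier G \<Longrightarrow> M c (\<delta> x) = sc (s x) (M c (\<delta> (rep (cos x)))) \<and> s x \<noteq> 0"
proof -
  assume x: "x \<in> carrier G"
  let ?r = "rep (cos x)"
  have r: "?r \<in> carrier G" using rep_carr[OF x] .
  obtain n where n: "n \<in> N" "x = n \<otimes> ?r" using rep_decomp[OF x] by blast
  have nG: "n \<in> carrier G" using N_carr n(1) by (rule subsetD)
  obtain \<mu> where mu: "M c (\<delta> n) = sc \<mu> c" using N_W[OF n(1)] by blast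
  have an: "\<alpha> n ?r \<noteq> 0" using nz nG r by simp
  have "sc (\<alpha> n ?r) (M c (\<delta> (n \<otimes> ?r))) = sc \<mu> (M c (\<delta> ?r))"
    using c_delta_mult[OF nG r] mu by (simp add: M_sc_left)
  hence "sc (1/\<alpha> n ?r) (sc (\<alpha> n ?r) (M c (\<delta> (n \<otimes> ?r)))) = sc (1/\<alpha> n ?r) (sc \<mu> (M c (\<delta> ?r)))" by simp
  hence "M c (\<delta> x) = sc (1/\<alpha> n ?r * \<mu>) (M c (\<delta> ?r))" using an n(2) by (simp add: sc_sc sc_one)
  hence ex: "\<exists>t. M c (\<delta> x) = sc t (M c (\<delta> ?r))" by blast
  have sp: "M c (\<delta> x) = sc (s x) (M c (\<delta> ?r))" unfolding s_def by (rule someI_ex[OF ex])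
  moreover have "s x \<noteq> 0"
  proof
    assume "s x = 0"
    hence "M c (\<delta> x) = 0" using sp by (simp add: sc_zero)
    thus False using cd_nz[OF x] by simp
  qed
  ultimately show ?thesis by blast
qed

definition Bf where "Bf p q = \<alpha> (rep p) (rep q) * s (rep p \<otimes> rep q)"

lemma key: "x \<in> carrier G \<Longrightarrow> y \<in> carrier G \<Longrightarrow> \<alpha> x y * s (x \<otimes> y) = s x * s y * Bf (cos x) (cos y)"
proof -
  assume x: "x \<in> carrier G" and y: "y \<in> carrier G"
  let ?rx = "rep (cos x)" and ?ry = "rep (cos y)"
  have rx: "?rx \<in> carrier G" and ry: "?ry \<in> carrier G" using rep_carr x y by auto
  have xy: "x \<otimes> y \<in> carrier G" and rxy: "?rx \<otimes> ?ry \<in> carrier G" using x y rx ry by auto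
  have ceq: "cos (?rx \<otimes> ?ry) = cos (x \<otimes> y)"
    using cos_mult[OF rx ry] cos_mult[OF x y] cos_rep[OF x] cos_rep[OF y] by simp
  note sx = s_prop[OF x] and sy = s_prop[OF y] and sxy = s_prop[OF xy] and srr = s_prop[OF rxy]
  have L1: "M (M c (\<delta> x)) (\<delta> y) = sc (\<alpha> x y * s (x \<otimes> y)) (M c (\<delta> (rep (cos (x \<otimes> y)))))"
    using c_delta_mult[OF x y] sxy by (simp add: sc_sc)
  have R1: "M (M c (\<delta> x)) (\<delta> y) = sc (s x * s y * Bf (cos x) (cos y)) (M c (\<delta> (rep (cos (x \<otimes> y)))))"
  proof -
    have "M (M c (\<delta> x)) (\<delta> y) = sc (s x) (M (M c (\<delta> ?rx)) (\<delta> y))" using sx by (simp add: M_sc_left)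
    also have "\<dots> = sc (s x) (M (M c (\<delta> y)) (\<delta> ?rx))" using c_swap_d[OF rx y] by simp
    also have "\<dots> = sc (s x * s y) (M (M c (\<delta> ?ry)) (\<delta> ?rx))" using sy by (simp add: M_sc_left sc_sc)
    also have "\<dots> = sc (s x * s y) (M (M c (\<delta> ?rx)) (\<delta> ?ry))" using c_swap_d[OF ry rx] by simp
    also have "\<dots> = sc (s x * s y * \<alpha> ?rx ?ry) (M c (\<delta> (?rx \<otimes> ?ry)))" using c_delta_mult[OF rx ry] by (simp add: sc_sc)
    also have "\<dots> = sc (s x * s y * \<alpha> ?rx ?ry * s (?rx \<otimes> ?ry)) (M c (\<delta> (rep (cos (x \<otimes> y)))))"
      using srr ceq by (simp add: sc_sc)
    finally show ?thesis unfolding Bf_def by (simp add: mult.assoc)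
  qed
  have "sc (\<alpha> x y * s (x \<otimes> y)) (M c (\<delta> (rep (cos (x \<otimes> y)))))
     = sc (s x * s y * Bf (cos x) (cos y)) (M c (\<delta> (rep (cos (x \<otimes> y)))))" using trans[OF sym[OF L1] R1] .
  thus ?thesis using sc_cancel cd_nz[OF rep_carr[OF xy]] by blast
qed


lemma Bf_formula: "x \<in> carrier G \<Longrightarrow> y \<in> carrier G \<Longrightarrow> Bf (cos x) (cos y) = \<alpha> x y * s (x \<otimes> y) / (s x * s y)"
  using key[of x y] s_prop[of x] s_prop[of y] by (simp add: field_simps)

lemma Bf_sym: "p \<in> carrier Q \<Longrightarrow> q \<in> carrier Q \<Longrightarrow> Bf p q = Bf q p"
proof -
  assume p: "p \<in> carrier Q" and q: "q \<in> carrier Q"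
  let ?a = "rep p" and ?b = "rep q"
  have a: "?a \<in> carrier G" and b: "?b \<in> carrier G" using rep_in p q by auto
  have ab: "?a \<otimes> ?b \<in> carrier G" and ba: "?b \<otimes> ?a \<in> carrier G" using a b by auto
  have ce: "rep (cos (?a \<otimes> ?b)) = rep (cos (?b \<otimes> ?a))" using cos_comm[OF a b] by simp
  have "sc (\<alpha> ?a ?b) (M c (\<delta> (?a \<otimes> ?b))) = sc (\<alpha> ?b ?a) (M c (\<delta> (?b \<otimes> ?a)))"
    using c_swap_d[OF a b] c_delta_mult[OF a b] c_delta_mult[OF b a] by simp
  hence "sc (\<alpha> ?a ?b * s (?a \<otimes> ?b)) (M c (\<delta> (rep (cos (?a \<otimes> ?b)))))
       = sc (\<alpha> ?b ?a * s (?b \<otimes> ?a)) (M c (\<delta> (rep (cos (?a \<otimes> ?b)))))"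
    using s_prop[OF ab] s_prop[OF ba] ce by (simp add: sc_sc)
  hence "\<alpha> ?a ?b * s (?a \<otimes> ?b) = \<alpha> ?b ?a * s (?b \<otimes> ?a)"
    using sc_cancel cd_nz[OF rep_carr[OF ab]] by blast
  thus ?thesis unfolding Bf_def .
qed

lemma F_coc:
  assumes a: "a \<in> carrier G" and b: "b \<in> carrier G" and d: "d \<in> carrier G"
  shows "(\<alpha> a b * s (a \<otimes> b) / (s a * s b)) * (\<alpha> (a \<otimes> b) d * s (a \<otimes> b \<otimes> d) / (s (a \<otimes> b) * s d))
       = (\<alpha> b d * s (b \<otimes> d) / (s b * s d)) * (\<alpha> a (b \<otimes> d) * s (a \<otimes> (b \<otimes> d)) / (s a * s (b \<otimes> d)))"
proof -
  have n: "s a \<noteq> 0" "s b \<noteq> 0" "s d \<noteq> 0" "s (a \<otimes> b) \<noteq> 0" "s (b \<otimes> d) \<noteq> 0"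
    using s_prop a b d by auto
  have "(\<alpha> a b * s (a \<otimes> b) / (s a * s b)) * (\<alpha> (a \<otimes> b) d * s (a \<otimes> b \<otimes> d) / (s (a \<otimes> b) * s d))
     = (\<alpha> a b * \<alpha> (a \<otimes> b) d) * s (a \<otimes> b \<otimes> d) / (s a * s b * s d)"
    using n by (simp add: field_simps)
  also have "\<dots> = (\<alpha> b d * \<alpha> a (b \<otimes> d)) * s (a \<otimes> (b \<otimes> d)) / (s a * s b * s d)"
    using cocy[OF a b d] a b d by (simp add: m_assoc)
  also have "\<dots> = (\<alpha> b d * s (b \<otimes> d) / (s b * s d)) * (\<alpha> a (b \<otimes> d) * s (a \<otimes> (b \<otimes> d)) / (s a * s (b \<otimes> d)))"
    using n by (simp add: field_simps)
  finally show ?thesis .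
qed

lemma Bf_cocycle: "two_cocycle Q Bf"
  unfolding two_cocycle_def
proof (intro conjI ballI)
  fix p q assume p: "p \<in> carrier Q" and q: "q \<in> carrier Q"
  have a: "rep p \<in> carrier G" and b: "rep q \<in> carrier G" using rep_in p q by auto
  show "Bf p q \<noteq> 0" unfolding Bf_def using nz[OF a b] s_prop[of "rep p \<otimes> rep q"] a b by simp
next
  fix p q t assume p: "p \<in> carrier Q" and q: "q \<in> carrier Q" and t: "t \<in> carrier Q"
  let ?a = "rep p" and ?b = "rep q" and ?d = "rep t"
  have a: "?a \<in> carrier G" and b: "?b \<in> carrier G" and d: "?d \<in> carrier G" using rep_in p q t by auto
  have cp: "p = cos ?a" and cq: "q = cos ?b" and ct: "t = cos ?d" using rep_in p q t by auto
  have pq: "p \<otimes>\<^bsub>Q\<^esub> q = cos (?a \<otimes> ?b)" using cp cq cos_mult[OF a b] by simp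
  have qt: "q \<otimes>\<^bsub>Q\<^esub> t = cos (?b \<otimes> ?d)" using cq ct cos_mult[OF b d] by simp
  have ab: "?a \<otimes> ?b \<in> carrier G" and bd: "?b \<otimes> ?d \<in> carrier G" using a b d by auto
  have "Bf p q * Bf (p \<otimes>\<^bsub>Q\<^esub> q) t
     = (\<alpha> ?a ?b * s (?a \<otimes> ?b) / (s ?a * s ?b)) * (\<alpha> (?a \<otimes> ?b) ?d * s (?a \<otimes> ?b \<otimes> ?d) / (s (?a \<otimes> ?b) * s ?d))"
    using Bf_formula[OF a b] Bf_formula[OF ab d] pq cp cq ct by metis
  also have "\<dots> = (\<alpha> ?b ?d * s (?b \<otimes> ?d) / (s ?b * s ?d)) * (\<alpha> ?a (?b \<otimes> ?d) * s (?a \<otimes> (?b \<otimes> ?d)) / (s ?a * s (?b \<otimes> ?d)))"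
    by (rule F_coc[OF a b d])
  also have "\<dots> = Bf q t * Bf p (q \<otimes>\<^bsub>Q\<^esub> t)"
    using Bf_formula[OF b d] Bf_formula[OF a bd] qt cp cq ct by metis
  finally show "Bf p q * Bf (p \<otimes>\<^bsub>Q\<^esub> q) t = Bf q t * Bf p (q \<otimes>\<^bsub>Q\<^esub> t)" .
qed

lemma forward_c: "\<exists>\<beta>. two_cocycle Q \<beta> \<and> in_Ext Q \<beta> \<and> cohomologous G (inflation G \<beta>) \<alpha>"
proof (intro exI conjI)
  show "two_cocycle Q Bf" by (rule Bf_cocycle)
  show "in_Ext Q Bf" unfolding in_Ext_def
  proof (intro exI conjI)
    show "symmetric_cocycle Q Bf" unfolding symmetric_cocycle_def using Bf_cocycle Bf_sym by blast
    show "cohomologous Q Bf Bf" unfolding cohomologous_def by (rule exI[of _ "\<lambda>_. 1"]) simp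
  qed
  show "cohomologous G (inflation G Bf) \<alpha>" unfolding cohomologous_def
  proof (rule exI[of _ s], intro conjI ballI)
    fix x assume "x \<in> carrier G" thus "s x \<noteq> 0" using s_prop by blast
  next
    fix x y assume x: "x \<in> carrier G" and y: "y \<in> carrier G"
    have "inflation G Bf x y = Bf (cos x) (cos y)" unfolding inflation_def cos_def ..
    moreover have "s (x \<otimes> y) \<noteq> 0" using s_prop x y by simp
    ultimately show "\<alpha> x y = inflation G Bf x y * s x * s y / s (x \<otimes> y)"
      using key[OF x y] by (simp add: field_simps)
  qed
qed

end


lemma forward:
  assumes ch: "of_nat (card (carrier G)) \<noteq> (0::'f)"
    and hc: "has_commutative_simple_component G \<alpha>"
  shows "\<exists>\<beta>. two_cocycle Q \<beta> \<and> in_Ext Q \<beta> \<and> cohomologous G (inflation G \<beta>) \<alpha>"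
proof -
  obtain I where I: "tga_simple_component G \<alpha> I" and com: "\<forall>a\<in>I. \<forall>b\<in>I. M a b = M b a"
    using hc unfolding has_commutative_simple_component_def by blast
  have Iid: "tga_ideal G \<alpha> I" and Inz: "I \<noteq> {0}"
    using I unfolding tga_simple_component_def zero_fun_def by auto
  note ip = ideal_props[OF Iid]
  have "\<not> (\<forall>a\<in>I. \<forall>b\<in>I. M a b = 0)"
  proof
    assume "\<forall>a\<in>I. \<forall>b\<in>I. M a b = 0"
    hence "I \<subseteq> {0}" using semiprime[OF Iid _ ch] by blast
    thus False using Inz ip(2) by blast
  qed
  then obtain a b where a: "a \<in> I" and b: "b \<in> I" and ab: "M a b \<noteq> 0" by blast
  have cA: "M a b \<in> A" by (rule M_in)
  show ?thesis
    using forward_c[OF cA ab central_from_ideal[OF Iid com b a]] .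
qed


context
  fixes \<gamma> :: "'g set \<Rightarrow> 'g set \<Rightarrow> 'f" and h :: "'g \<Rightarrow> 'f"
  assumes gsym: "symmetric_cocycle Q \<gamma>"
    and hnz: "\<forall>x\<in>carrier G. h x \<noteq> 0"
    and rel: "\<forall>x\<in>carrier G. \<forall>y\<in>carrier G. \<alpha> x y = \<gamma> (cos x) (cos y) * h x * h y / h (x \<otimes> y)"
    and chN: "of_nat (card N) \<noteq> (0::'f)"
begin

definition v where "v x = sc (1 / h x) (\<delta> x)"
definition c' where "c' = \<gamma> N N"
definition \<kappa> where "\<kappa> = 1 / (c' * of_nat (card N))"
definition e where "e = sc \<kappa> (\<Sum>n\<in>N. v n)"

lemma gcoc: "two_cocycle Q \<gamma>" using gsym unfolding symmetric_cocycle_def by blast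

lemma c'_nz: "c' \<noteq> 0"
  using gcoc monoid.one_closed[OF group.is_monoid[OF Q_group]] unfolding two_cocycle_def c'_def one_Q by blast

lemma kappa_nz: "\<kappa> \<noteq> 0" using c'_nz chN unfolding \<kappa>_def by simp

lemma v_in: "x \<in> carrier G \<Longrightarrow> v x \<in> A" unfolding v_def by (intro sc_in delta_in)

lemma delta_v: "x \<in> carrier G \<Longrightarrow> \<delta> x = sc (h x) (v x)"
  using hnz by (simp add: v_def sc_sc sc_one)

lemma M_v: "x \<in> carrier G \<Longrightarrow> y \<in> carrier G \<Longrightarrow> M (v x) (v y) = sc (\<gamma> (cos x) (cos y)) (v (x \<otimes> y))"
proof -
  assume x: "x \<in> carrier G" and y: "y \<in> carrier G"
  have n: "h x \<noteq> 0" "h y \<noteq> 0" "h (x \<otimes> y) \<noteq> 0" using hnz x y by auto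
  have "1 / h y * (1 / h x * \<alpha> x y) = \<gamma> (cos x) (cos y) * (1 / h (x \<otimes> y))"
    using rel x y n by (simp add: field_simps)
  thus ?thesis unfolding v_def M_sc_left M_sc_right M_delta[OF x y] sc_sc by (simp only:)
qed

lemma g_unit: "x \<in> carrier G \<Longrightarrow> n \<in> N \<Longrightarrow> \<gamma> (cos x) (cos n) = c' \<and> \<gamma> (cos n) (cos x) = c'"
  using cocycle_unit[OF Q_group gcoc cos_in, of x] cos_N[of n] unfolding c'_def one_Q by simp

lemma sum_coset_r: "g \<in> carrier G \<Longrightarrow> (\<Sum>n\<in>N. f (n \<otimes> g)) = (\<Sum>y\<in>N #> g. f y)"
proof -
  assume g: "g \<in> carrier G"
  have inj: "inj_on (\<lambda>n. n \<otimes> g) N"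
  proof (rule inj_onI)
    fix x y assume xy: "x \<in> N" "y \<in> N" and eq: "x \<otimes> g = y \<otimes> g"
    have "x \<in> carrier G" "y \<in> carrier G" using subsetD[OF N_carr] xy by auto
    thus "x = y" using r_cancel[OF eq _ _ g] by blast
  qed
  have "N #> g = (\<lambda>n. n \<otimes> g) ` N" unfolding r_coset_def by auto
  thus ?thesis using sum.reindex[OF inj, of f] by simp
qed

lemma sum_coset_l: "g \<in> carrier G \<Longrightarrow> (\<Sum>n\<in>N. f (g \<otimes> n)) = (\<Sum>y\<in>N #> g. f y)"
proof -
  assume g: "g \<in> carrier G"
  have inj: "inj_on (\<lambda>n. g \<otimes> n) N"
  proof (rule inj_onI)
    fix x y assume xy: "x \<in> N" "y \<in> N" and eq: "g \<otimes> x = g \<otimes> y"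
    have "x \<in> carrier G" "y \<in> carrier G" using subsetD[OF N_carr] xy by auto
    thus "x = y" using l_cancel[OF eq _ _ g] by blast
  qed
  have "g <# N = (\<lambda>n. g \<otimes> n) ` N" unfolding l_coset_def by auto
  moreover have "N #> g = g <# N" using normal.coset_eq[OF N_normal] g by blast
  ultimately show ?thesis using sum.reindex[OF inj, of f] by simp
qed

lemma sum_N_shift: "n \<in> N \<Longrightarrow> (\<Sum>m\<in>N. f (m \<otimes> n)) = (\<Sum>m\<in>N. f m)"
proof -
  assume n: "n \<in> N"
  have nG: "n \<in> carrier G" using N_carr n by (rule subsetD)
  have "N #> n = N" using subgroup.rcos_const[OF N_sub is_group n] .
  thus ?thesis using sum_coset_r[OF nG, of f] by simp
qed

lemma e_in: "e \<in> A" unfolding e_def by (intro sc_in sum_in v_in) (use N_carr in blast)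

lemma e_v_comm: "g \<in> carrier G \<Longrightarrow> M e (v g) = M (v g) e"
proof -
  assume g: "g \<in> carrier G"
  have "M e (v g) = sc \<kappa> (\<Sum>n\<in>N. sc c' (v (n \<otimes> g)))"
    unfolding e_def using g N_carr g_unit
    by (auto simp: M_sc_left M_sum_left M_v intro!: arg_cong[where f="sc \<kappa>"] sum.cong)
  also have "\<dots> = sc \<kappa> (\<Sum>n\<in>N. sc c' (v (g \<otimes> n)))"
    using sum_coset_r[OF g, of "\<lambda>y. sc c' (v y)"] sum_coset_l[OF g, of "\<lambda>y. sc c' (v y)"] by simp
  also have "\<dots> = M (v g) e"
    unfolding e_def using g N_carr g_unit
    by (auto simp: M_sc_right M_sum_right M_v intro!: arg_cong[where f="sc \<kappa>"] sum.cong)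
  finally show ?thesis .
qed

lemma e_central: "r \<in> A \<Longrightarrow> M e r = M r e"
proof -
  assume r: "r \<in> A"
  have d: "M e (\<delta> g) = M (\<delta> g) e" if g: "g \<in> carrier G" for g
    using e_v_comm[OF g] delta_v[OF g] by (simp add: M_sc_left M_sc_right)
  have "M e r = (\<Sum>g\<in>carrier G. sc (r g) (M e (\<delta> g)))"
    by (subst expand[OF r]) (simp add: M_sum_right M_sc_right)
  also have "\<dots> = (\<Sum>g\<in>carrier G. sc (r g) (M (\<delta> g) e))" using d by simp
  also have "\<dots> = M r e"
    by (subst (2) expand[OF r]) (simp add: M_sum_left M_sc_left)
  finally show ?thesis .
qed


lemma e_vn: "n \<in> N \<Longrightarrow> M e (v n) = sc c' e"
proof -
  assume n: "n \<in> N"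
  have nG: "n \<in> carrier G" using N_carr n by (rule subsetD)
  have "M e (v n) = sc \<kappa> (\<Sum>m\<in>N. sc c' (v (m \<otimes> n)))"
    unfolding e_def using nG N_carr g_unit n
    by (auto simp: M_sc_left M_sum_left M_v intro!: arg_cong[where f="sc \<kappa>"] sum.cong)
  also have "\<dots> = sc \<kappa> (\<Sum>m\<in>N. sc c' (v m))" using sum_N_shift[OF n, of "\<lambda>y. sc c' (v y)"] by simp
  also have "\<dots> = sc c' e" unfolding e_def by (simp add: sc_sum sc_sc mult.commute)
  finally show ?thesis .
qed

lemma e_shift: "x \<in> carrier G \<Longrightarrow> n \<in> N \<Longrightarrow> M e (v (x \<otimes> n)) = M e (v x)"
proof -
  assume x: "x \<in> carrier G" and n: "n \<in> N"
  have nG: "n \<in> carrier G" using N_carr n by (rule subsetD)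
  have "sc c' (M e (v (x \<otimes> n))) = M e (M (v x) (v n))"
    using M_v[OF x nG] g_unit[OF x n] by (simp add: M_sc_right)
  also have "\<dots> = M (M e (v x)) (v n)" using M_assoc[OF e_in v_in[OF x] v_in[OF nG]] by simp
  also have "\<dots> = M (M (v x) e) (v n)" using e_v_comm[OF x] by simp
  also have "\<dots> = M (v x) (M e (v n))" using M_assoc[OF v_in[OF x] e_in v_in[OF nG]] .
  also have "\<dots> = sc c' (M e (v x))" using e_vn[OF n] e_v_comm[OF x] by (simp add: M_sc_right)
  finally have "sc c' (M e (v (x \<otimes> n))) = sc c' (M e (v x))" .
  hence "sc (1/c') (sc c' (M e (v (x \<otimes> n)))) = sc (1/c') (sc c' (M e (v x)))" by (rule arg_cong)
  hence "sc (1/c' * c') (M e (v (x \<otimes> n))) = sc (1/c' * c') (M e (v x))" by (simp only: sc_sc)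
  moreover have "1/c' * c' = 1" using c'_nz by simp
  ultimately show ?thesis by (simp only: sc_one)
qed

lemma e_swap_v: "g \<in> carrier G \<Longrightarrow> k \<in> carrier G \<Longrightarrow> M e (M (v g) (v k)) = M e (M (v k) (v g))"
proof -
  assume g: "g \<in> carrier G" and k: "k \<in> carrier G"
  have gs: "\<gamma> (cos g) (cos k) = \<gamma> (cos k) (cos g)"
    using gsym cos_in[OF g] cos_in[OF k] unfolding symmetric_cocycle_def by blast
  have gk: "g \<otimes> k \<in> carrier G" using g k by simp
  have nn: "inv (g \<otimes> k) \<otimes> (k \<otimes> g) \<in> N" by (rule comm_in_N[OF g k])
  have eq: "g \<otimes> k \<otimes> (inv (g \<otimes> k) \<otimes> (k \<otimes> g)) = k \<otimes> g"
    using g k by (simp add: m_assoc[symmetric])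
  have "M e (v (k \<otimes> g)) = M e (v (g \<otimes> k))" using e_shift[OF gk nn] eq by simp
  thus ?thesis using M_v[OF g k] M_v[OF k g] gs by (simp add: M_sc_right)
qed

lemma bil: "M e (M (\<Sum>g\<in>S. sc (p g) (\<delta> g)) (\<Sum>k\<in>S. sc (q k) (\<delta> k)))
   = (\<Sum>k\<in>S. \<Sum>g\<in>S. sc (q k * p g) (M e (M (\<delta> g) (\<delta> k))))"
  by (simp add: M_sum_left M_sum_right M_sc_left M_sc_right sc_sum sc_sc)

lemma e_swap: "r \<in> A \<Longrightarrow> t \<in> A \<Longrightarrow> M e (M r t) = M e (M t r)"
proof -
  assume r: "r \<in> A" and t: "t \<in> A"
  let ?S = "carrier G"
  have d: "M e (M (\<delta> g) (\<delta> k)) = M e (M (\<delta> k) (\<delta> g))" if "g \<in> ?S" "k \<in> ?S" for g k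
    using e_swap_v[OF that] delta_v[OF that(1)] delta_v[OF that(2)]
    by (simp add: M_sc_left M_sc_right sc_sc mult.commute)
  have "M e (M r t) = M e (M (\<Sum>g\<in>?S. sc (r g) (\<delta> g)) (\<Sum>k\<in>?S. sc (t k) (\<delta> k)))"
    by (simp only: expand[OF r, symmetric] expand[OF t, symmetric])
  also have "\<dots> = (\<Sum>k\<in>?S. \<Sum>g\<in>?S. sc (t k * r g) (M e (M (\<delta> g) (\<delta> k))))" by (rule bil)
  also have "\<dots> = (\<Sum>k\<in>?S. \<Sum>g\<in>?S. sc (r g * t k) (M e (M (\<delta> k) (\<delta> g))))"
    using d by (intro sum.cong refl) (simp add: mult.commute)
  also have "\<dots> = (\<Sum>g\<in>?S. \<Sum>k\<in>?S. sc (r g * t k) (M e (M (\<delta> k) (\<delta> g))))"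
    by (rule sum.swap)
  also have "\<dots> = M e (M (\<Sum>k\<in>?S. sc (t k) (\<delta> k)) (\<Sum>g\<in>?S. sc (r g) (\<delta> g)))" by (rule bil[symmetric])
  also have "\<dots> = M e (M t r)"
    by (simp only: expand[OF r, symmetric] expand[OF t, symmetric])
  finally show ?thesis .
qed

lemma e_nz: "e \<noteq> 0"
proof
  assume e0: "e = 0"
  have oneN: "\<one> \<in> N" using subgroup.one_closed[OF N_sub] .
  have "e \<one> = \<kappa> * (\<Sum>n\<in>N. (1 / h n) * (if \<one> = n then 1 else 0))"
    unfolding e_def v_def by (simp add: sc_def sum_fun_apply \<delta>_def)
  also have "\<dots> = \<kappa> * (1 / h \<one>)"
  proof -
    have "(\<Sum>n\<in>N. (1 / h n) * (if \<one> = n then 1 else 0)) = (\<Sum>n\<in>N. if \<one> = n then 1 / h n else 0)"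
      by (intro sum.cong) auto
    also have "\<dots> = 1 / h \<one>" using oneN finite_subset[OF N_carr fin] by (simp add: sum.delta)
    finally show ?thesis by simp
  qed
  finally have "e \<one> = \<kappa> * (1 / h \<one>)" .
  moreover have "h \<one> \<noteq> 0" using hnz by simp
  ultimately show False using e0 kappa_nz by simp
qed

definition J where "J = {M e r | r. r \<in> A}"

lemma J_ideal: "tga_ideal G \<alpha> J"
  unfolding tga_ideal_def
proof (intro conjI ballI allI)
  show "J \<subseteq> A" unfolding J_def using M_in by blast
  have "(\<lambda>_. 0) = M e 0" using M_zero by (simp add: zero_fun_def)
  thus "(\<lambda>_. 0) \<in> J" unfolding J_def using zero_in by blast
  fix a b assume a: "a \<in> J" and b: "b \<in> J"
  then obtain r t where r: "r \<in> A" "a = M e r" and t: "t \<in> A" "b = M e t" unfolding J_def by blast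
  have "(\<lambda>x. a x + b x) = M e (r + t)" unfolding r(2) t(2) M_add_right unfolding plus_fun_def by (rule refl)
  thus "(\<lambda>x. a x + b x) \<in> J" unfolding J_def using add_in[OF r(1) t(1)] by blast
next
  fix c a assume a: "a \<in> J"
  then obtain r where r: "r \<in> A" "a = M e r" unfolding J_def by blast
  have "(\<lambda>x. c * a x) = M e (sc c r)" unfolding r(2) M_sc_right unfolding sc_def by (rule refl)
  thus "(\<lambda>x. c * a x) \<in> J" unfolding J_def using sc_in[OF r(1)] by blast
next
  fix q a assume q: "q \<in> A" and a: "a \<in> J"
  then obtain r where r: "r \<in> A" "a = M e r" unfolding J_def by blast
  have "M q a = M e (M q r)"
    using r M_assoc[OF q e_in r(1)] M_assoc[OF e_in q r(1)] e_central[OF q] by simp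
  thus "M q a \<in> J" unfolding J_def using M_in by blast
next
  fix q a assume q: "q \<in> A" and a: "a \<in> J"
  then obtain r where r: "r \<in> A" "a = M e r" unfolding J_def by blast
  have "M a q = M e (M r q)" using r M_assoc[OF e_in r(1) q] by simp
  thus "M a q \<in> J" unfolding J_def using M_in by blast
qed

lemma J_comm: "\<forall>a\<in>J. \<forall>b\<in>J. M a b = M b a"
proof (intro ballI)
  fix a b assume a: "a \<in> J" and b: "b \<in> J"
  then obtain r t where r: "r \<in> A" "a = M e r" and t: "t \<in> A" "b = M e t" unfolding J_def by blast
  have gen: "M (M e x) (M e y) = M e (M e (M x y))" if x: "x \<in> A" and y: "y \<in> A" for x y
  proof -
    have "M (M e x) (M e y) = M e (M x (M e y))" using M_assoc[OF e_in x M_in] .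
    also have "M x (M e y) = M (M x e) y" using M_assoc[OF x e_in y] by simp
    also have "\<dots> = M (M e x) y" using e_central[OF x] by simp
    also have "\<dots> = M e (M x y)" using M_assoc[OF e_in x y] .
    finally show ?thesis .
  qed
  have "M a b = M e (M e (M r t))" using gen[OF r(1) t(1)] r t by simp
  also have "\<dots> = M e (M e (M t r))" using e_swap[OF r(1) t(1)] by simp
  also have "\<dots> = M b a" using gen[OF t(1) r(1)] r t by simp
  finally show "M a b = M b a" .
qed

lemma backward_c: "has_commutative_simple_component G \<alpha>"
proof -
  have "e = M e e1" using M_e1_right[OF e_in] by simp
  hence "e \<in> J" unfolding J_def using e1_in by blast
  hence "J \<noteq> {0}" using e_nz by blast
  then obtain K where K: "tga_simple_component G \<alpha> K" "K \<subseteq> J"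
    using minimal_ideal_exists[OF J_ideal] by blast
  thus ?thesis unfolding has_commutative_simple_component_def using J_comm by blast
qed

end


lemma backward:
  assumes ch: "of_nat (card (carrier G)) \<noteq> (0::'f)"
    and b2: "two_cocycle Q \<beta>" and bE: "in_Ext Q \<beta>" and bc: "cohomologous G (inflation G \<beta>) \<alpha>"
  shows "has_commutative_simple_component G \<alpha>"
proof -
  obtain \<gamma> where gs: "symmetric_cocycle Q \<gamma>" and gc: "cohomologous Q \<beta> \<gamma>"
    using bE unfolding in_Ext_def by blast
  obtain f1 where f1nz: "\<forall>p\<in>carrier Q. f1 p \<noteq> 0"
    and f1: "\<forall>p\<in>carrier Q. \<forall>q\<in>carrier Q. \<gamma> p q = \<beta> p q * f1 p * f1 q / f1 (p \<otimes>\<^bsub>Q\<^esub> q)"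
    using gc unfolding cohomologous_def by blast
  obtain f2 where f2nz: "\<forall>x\<in>carrier G. f2 x \<noteq> 0"
    and f2: "\<forall>x\<in>carrier G. \<forall>y\<in>carrier G. \<alpha> x y = inflation G \<beta> x y * f2 x * f2 y / f2 (x \<otimes> y)"
    using bc unfolding cohomologous_def by blast
  define h where "h x = f2 x / f1 (cos x)" for x
  have hnz: "\<forall>x\<in>carrier G. h x \<noteq> 0" using f1nz f2nz cos_in unfolding h_def by simp
  have rel: "\<forall>x\<in>carrier G. \<forall>y\<in>carrier G. \<alpha> x y = \<gamma> (cos x) (cos y) * h x * h y / h (x \<otimes> y)"
  proof (intro ballI)
    fix x y assume x: "x \<in> carrier G" and y: "y \<in> carrier G"
    have xy: "x \<otimes> y \<in> carrier G" using x y by simp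
    have infl: "inflation G \<beta> x y = \<beta> (cos x) (cos y)" unfolding inflation_def cos_def ..
    have g: "\<gamma> (cos x) (cos y) = \<beta> (cos x) (cos y) * f1 (cos x) * f1 (cos y) / f1 (cos (x \<otimes> y))"
      using f1 cos_in[OF x] cos_in[OF y] cos_mult[OF x y] by simp
    have n: "f1 (cos x) \<noteq> 0" "f1 (cos y) \<noteq> 0" "f1 (cos (x \<otimes> y)) \<noteq> 0" "f2 x \<noteq> 0" "f2 y \<noteq> 0" "f2 (x \<otimes> y) \<noteq> 0"
      using f1nz f2nz cos_in x y xy by auto
    have "\<alpha> x y = \<beta> (cos x) (cos y) * f2 x * f2 y / f2 (x \<otimes> y)" using f2 x y infl by simp
    thus "\<alpha> x y = \<gamma> (cos x) (cos y) * h x * h y / h (x \<otimes> y)"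
      unfolding g h_def using n by (simp add: field_simps)
  qed
  have chN: "of_nat (card N) \<noteq> (0::'f)"
  proof
    assume z: "of_nat (card N) = (0::'f)"
    have "card (rcosets N) * card N = order G" by (rule lagrange[OF N_sub])
    hence "(of_nat (card (carrier G)) :: 'f) = of_nat (card (rcosets N)) * of_nat (card N)"
      unfolding order_def by (metis of_nat_mult)
    thus False using z ch by simp
  qed
  show ?thesis by (rule backward_c[OF gs hnz rel chN])
qed

end

theorem proposition2p3:
  fixes G :: "'g monoid" and \<alpha> :: "'g \<Rightarrow> 'g \<Rightarrow> 'f::field"
  assumes "group G" and "finite (carrier G)"
    and "\<not> CHAR('f) dvd order G"
    and "two_cocycle G \<alpha>"
  shows "has_commutative_simple_component G \<alpha> \<longleftrightarrow>
    (\<exists>\<beta>. two_cocycle (abelianization G) \<beta> \<and> in_Ext (abelianization G) \<beta> \<and>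
         cohomologous G (inflation G \<beta>) \<alpha>)"
proof -
  interpret tga G \<alpha>
    using assms unfolding tga_def tga_axioms_def by blast
  have ch: "of_nat (card (carrier G)) \<noteq> (0::'f)"
    using assms(3) unfolding order_def by (simp add: of_nat_eq_0_iff_char_dvd)
  show ?thesis
  proof
    assume "has_commutative_simple_component G \<alpha>"
    thus "\<exists>\<beta>. two_cocycle (abelianization G) \<beta> \<and> in_Ext (abelianization G) \<beta> \<and>
         cohomologous G (inflation G \<beta>) \<alpha>" using forward[OF ch] by blast
  next
    assume "\<exists>\<beta>. two_cocycle (abelianization G) \<beta> \<and> in_Ext (abelianization G) \<beta> \<and>
         cohomologous G (inflation G \<beta>) \<alpha>"
    then obtain \<beta> where "two_cocycle (abelianization G) \<beta>" "in_Ext (abelianization G) \<beta>"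
         "cohomologous G (inflation G \<beta>) \<alpha>" by blast
    thus "has_commutative_simple_component G \<alpha>" using backward[OF ch] by blast
  qed
qed

end
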